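(* Let $\alpha>-1$ and $X=L^2[(-1,1);w]$ with the Gegenbauer weight $w(t)=(1-t^2)^\alpha$, inner product $(p,q)_w=\int_{-1}^1p(t)\overline{q(t)}w(t)\,\mathrm dt$ and norm $\|p\|_X=\sqrt{(p,p)_w}$. Let $p_0,p_1,\dots$ be the orthonormal polynomials with respect to $w$ (positive leading coefficients). Fix $n\ge1$, let $A_{n,1}$ be the $n\times n$ upper triangular matrix with entries $a_{i,j}=\int_{-1}^1p_j'(t)p_{i-1}(t)w(t)\,\mathrm dt$, $i,j=1,\dots,n$, and let $C_n=[c_{i,j}]_{i,j=1}^n=(A_{n,1}^T)^{-1}A_{n,1}^{-1}$. For $m\ge1$ let $E_m$ be the $m\times m$ principal submatrix of $C_n$ on the odd indices $1,3,\dots,2m-1$ (a tridiagonal matrix with diagonal $c_{1,1},c_{3,3},\dots,c_{2m-1,2m-1}$ and off-diagonal entries $c_{1,3},\dots,c_{2m-3,2m-1}$), and $\widehat E_m$ the $m\times m$ principal submatrix on the even indices $2,4,\dots,2m$ (diagonal $c_{2,2},\dots,c_{2m,2m}$, off-diagonal entries $c_{2,4},\dots,c_{2m-2,2m}$). Then $$M_n(\alpha)=\sup_{p\in\mathcal P_n\setminus\{0\}}\frac{\|p'\|_X}{\|p\|_X}=\frac{1}{\sqrt{\min\bigl\{\lambda_{\min}(E_{[(n+1)/2]}),\,\lambda_{\min}(\widehat E_{[n/2]})\bigr\}}},$$ where $\mathcal P_n$ is the set of algebraic polynomials of degree at most $n$, $[x]$ is the integer part of $x$, and $\lambda_{\min}$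 denotes the smallest eigenvalue (for $n=1$ only $E_1$ is present). *)

theory Defs
  imports "HOL-Analysis.Analysis" "HOL-Computational_Algebra.Polynomial"
    "Jordan_Normal_Form.Char_Poly" "Jordan_Normal_Form.Gauss_Jordan_Elimination"
begin

definition gweight :: "real \<Rightarrow> real \<Rightarrow> real" where
  "gweight \<alpha> t = (1 - t\<^sup>2) powr \<alpha>"

definition wip :: "real \<Rightarrow> (real \<Rightarrow> real) \<Rightarrow> (real \<Rightarrow> real) \<Rightarrow> real" where
  "wip \<alpha> f g = (LINT t:{-1<..<1}|lborel. f t * g t * gweight \<alpha> t)"

definition wnorm :: "real \<Rightarrow> complex poly \<Rightarrow> real" where
  "wnorm \<alpha> p = sqrt (LINT t:{-1<..<1}|lborel. (cmod (poly p (of_real t)))\<^sup>2 * gweight \<alpha> t)"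

definition orthonormal_polys :: "real \<Rightarrow> (nat \<Rightarrow> real poly) \<Rightarrow> bool" where
  "orthonormal_polys \<alpha> p \<longleftrightarrow>
     (\<forall>k. degree (p k) = k \<and> lead_coeff (p k) > 0) \<and>
     (\<forall>j k. wip \<alpha> (poly (p j)) (poly (p k)) = (if j = k then 1 else 0))"

definition markov_const :: "real \<Rightarrow> nat \<Rightarrow> real" where
  "markov_const \<alpha> n =
     Sup {wnorm \<alpha> (pderiv p) / wnorm \<alpha> p | p. p \<noteq> 0 \<and> degree p \<le> n}"

text \<open>The matrix A_{n,1} (0-based: entry (i,j) is a_{i+1,j+1}).\<close>
definition A_mat :: "real \<Rightarrow> (nat \<Rightarrow> real poly) \<Rightarrow> nat \<Rightarrow> real mat" where
  "A_mat \<alpha> p n = mat n n (\<lambda>(i,j). wip \<alpha> (poly (pderiv (p (j+1)))) (poly (p i)))"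

definition C_mat :: "real \<Rightarrow> (nat \<Rightarrow> real poly) \<Rightarrow> nat \<Rightarrow> real mat" where
  "C_mat \<alpha> p n = the (mat_inverse (transpose_mat (A_mat \<alpha> p n))) * the (mat_inverse (A_mat \<alpha> p n))"

text \<open>Principal submatrices on odd indices 1,3,..,2m-1 and even indices 2,4,..,2m (1-based).\<close>
definition E_odd :: "real mat \<Rightarrow> nat \<Rightarrow> real mat" where
  "E_odd C m = mat m m (\<lambda>(i,j). C $$ (2*i, 2*j))"

definition E_even :: "real mat \<Rightarrow> nat \<Rightarrow> real mat" where
  "E_even C m = mat m m (\<lambda>(i,j). C $$ (2*i+1, 2*j+1))"

definition lambda_min :: "real mat \<Rightarrow> real" where
  "lambda_min E = Min {l. eigenvalue E l}"

end

theory Submission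
  imports Defs
begin

definition qf :: "real mat \<Rightarrow> nat \<Rightarrow> (nat \<Rightarrow> real) \<Rightarrow> real" where
  "qf E m x = (\<Sum>i<m. \<Sum>j<m. x i * E$$(i,j) * x j)"

definition nsq :: "nat \<Rightarrow> (nat \<Rightarrow> real) \<Rightarrow> real" where
  "nsq m x = (\<Sum>i<m. (x i)\<^sup>2)"

lemma coord_subseq:
  fixes X :: "nat \<Rightarrow> nat \<Rightarrow> real"
  assumes "\<And>k i. i < m \<Longrightarrow> \<bar>X k i\<bar> \<le> 1"
  shows "\<exists>r. strict_mono r \<and> (\<forall>i<m. convergent (\<lambda>k. X (r k) i))"
  using assms
proof (induction m)
  case 0
  then show ?case by (auto intro: strict_mono_id[unfolded id_def])
next
  case (Suc m)
  then obtain r where r: "strict_mono r" "\<forall>i<m. convergent (\<lambda>k. X (r k) i)" by auto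
  have "bounded (range (\<lambda>k. X (r k) m))"
    using Suc.prems[of m] unfolding bounded_iff by (auto intro!: exI[of _ 1])
  from bounded_imp_convergent_subsequence[OF this] obtain l r' where
    r': "strict_mono r'" "((\<lambda>k. X (r k) m) \<circ> r') \<longlonglongrightarrow> l" by blast
  have "strict_mono (r \<circ> r')" using r r' by (simp add: strict_mono_o)
  moreover have "convergent (\<lambda>k. X ((r \<circ> r') k) i)" if "i < Suc m" for i
  proof (cases "i = m")
    case True
    then show ?thesis using r' by (auto simp: convergent_def o_def)
  next
    case False
    then have "i < m" using that by auto
    with r obtain L where "(\<lambda>k. X (r k) i) \<longlonglongrightarrow> L" by (auto simp: convergent_def)
    from LIMSEQ_subseq_LIMSEQ[OF this r'(1)] show ?thesis by (auto simp: convergent_def o_def)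
  qed
  ultimately show ?case by blast
qed

lemma quad_zero:
  fixes a c :: real
  assumes "\<And>t. 2*t*a + t\<^sup>2*c \<ge> 0"
  shows "a = 0"
proof (rule ccontr)
  assume a: "a \<noteq> 0"
  define t where "t = - a / (\<bar>c\<bar> + 1)"
  have pos: "\<bar>c\<bar> + 1 > 0" by simp
  have "2*t*a = -2*a^2/(\<bar>c\<bar>+1)" unfolding t_def by (simp add: power2_eq_square)
  moreover have "t\<^sup>2*c \<le> t\<^sup>2*\<bar>c\<bar>" by (simp add: mult_left_mono)
  moreover have "t\<^sup>2*\<bar>c\<bar> = a^2 * \<bar>c\<bar> /(\<bar>c\<bar>+1)^2" unfolding t_def by (simp add: power_divide)
  moreover have "a^2 * \<bar>c\<bar> /(\<bar>c\<bar>+1)^2 \<le> a^2/(\<bar>c\<bar>+1)"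
  proof -
    have "a^2 * \<bar>c\<bar> /(\<bar>c\<bar>+1)^2 = (a^2/(\<bar>c\<bar>+1)) * (\<bar>c\<bar>/(\<bar>c\<bar>+1))"
      by (simp add: power2_eq_square)
    also have "\<dots> \<le> (a^2/(\<bar>c\<bar>+1)) * 1"
      by (rule mult_left_mono) (use pos in auto)
    finally show ?thesis by simp
  qed
  moreover have "a^2/(\<bar>c\<bar>+1) > 0" using a pos by simp
  moreover have "-2*a^2/(\<bar>c\<bar>+1) = -2*(a^2/(\<bar>c\<bar>+1))" by simp
  ultimately have "2*t*a + t\<^sup>2*c < 0" by linarith
  with assms[of t] show False by simp
qed

lemma qf_scale: "qf E m (\<lambda>i. a * x i) = a\<^sup>2 * qf E m x"
  unfolding qf_def by (simp add: sum_distrib_left power2_eq_square algebra_simps)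

lemma nsq_scale: "nsq m (\<lambda>i. a * x i) = a\<^sup>2 * nsq m x"
  unfolding nsq_def by (simp add: sum_distrib_left power_mult_distrib)

lemma nsq_nonneg: "nsq m x \<ge> 0"
  unfolding nsq_def by (simp add: sum_nonneg)

lemma nsq_zero: "nsq m x = 0 \<Longrightarrow> i < m \<Longrightarrow> x i = 0"
  unfolding nsq_def by (subst (asm) sum_nonneg_eq_0_iff) auto

lemma nsq_one_le: "nsq m x = 1 \<Longrightarrow> i < m \<Longrightarrow> \<bar>x i\<bar> \<le> 1"
proof -
  assume "nsq m x = 1" "i < m"
  then have "(x i)\<^sup>2 \<le> 1" unfolding nsq_def
    by (metis finite_lessThan lessThan_iff member_le_sum zero_le_power2)
  then show ?thesis using abs_square_le_1 by blast
qed

lemma qf_expand: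
  assumes sym: "\<And>i j. i < m \<Longrightarrow> j < m \<Longrightarrow> E$$(i,j) = E$$(j,i)"
  shows "qf E m (\<lambda>i. v i + t * w i) = qf E m v + 2*t*(\<Sum>i<m. \<Sum>j<m. w i * E$$(i,j) * v j) + t\<^sup>2 * qf E m w"
proof -
  have swap: "(\<Sum>i<m. \<Sum>j<m. v i * E$$(i,j) * w j) = (\<Sum>i<m. \<Sum>j<m. w i * E$$(i,j) * v j)"
    by (subst sum.swap) (auto intro!: sum.cong simp: sym)
  have "qf E m (\<lambda>i. v i + t * w i) = (\<Sum>i<m. \<Sum>j<m. v i * E$$(i,j) * v j + t * (v i * E$$(i,j) * w j)
     + t * (w i * E$$(i,j) * v j) + t\<^sup>2 * (w i * E$$(i,j) * w j))"
    unfolding qf_def by (auto intro!: sum.cong simp: algebra_simps power2_eq_square)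
  also have "\<dots> = qf E m v + t * (\<Sum>i<m. \<Sum>j<m. v i * E$$(i,j) * w j) + t * (\<Sum>i<m. \<Sum>j<m. w i * E$$(i,j) * v j) + t\<^sup>2 * qf E m w"
    unfolding qf_def by (simp add: sum.distrib sum_distrib_left)
  finally show ?thesis using swap by simp
qed

lemma nsq_expand: "nsq m (\<lambda>i. v i + t * w i) = nsq m v + 2*t*(\<Sum>i<m. w i * v i) + t\<^sup>2 * nsq m w"
  unfolding nsq_def by (simp add: sum.distrib sum_distrib_left power2_eq_square algebra_simps)

lemma qf_bound:
  assumes "nsq m x = 1"
  shows "- (\<Sum>i<m. \<Sum>j<m. \<bar>E$$(i,j)\<bar>) \<le> qf E m x"
proof -
  have "- \<bar>E$$(i,j)\<bar> \<le> x i * E$$(i,j) * x j" if "i < m" "j < m" for i j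
  proof -
    have "\<bar>x i\<bar> * \<bar>E$$(i,j)\<bar> * \<bar>x j\<bar> \<le> 1 * \<bar>E$$(i,j)\<bar> * 1"
      using nsq_one_le[OF assms that(1)] nsq_one_le[OF assms that(2)]
      by (intro mult_mono) auto
    then have "\<bar>x i * E$$(i,j) * x j\<bar> \<le> \<bar>E$$(i,j)\<bar>" by (simp add: abs_mult)
    then show ?thesis by linarith
  qed
  then have "(\<Sum>i<m. \<Sum>j<m. - \<bar>E$$(i,j)\<bar>) \<le> qf E m x"
    unfolding qf_def by (intro sum_mono) auto
  then show ?thesis by (simp add: sum_negf)
qed

lemma rayleigh:
  assumes E: "E \<in> carrier_mat m m" and m: "m > 0"
    and sym: "\<And>i j. i < m \<Longrightarrow> j < m \<Longrightarrow> E$$(i,j) = E$$(j,i)"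
  shows "\<exists>x. nsq m x = 1 \<and> qf E m x = lambda_min E"
    and "\<And>y. qf E m y \<ge> lambda_min E * nsq m y"
proof -
  define S where "S = {qf E m x | x. nsq m x = 1}"
  define K where "K = (\<Sum>i<m. \<Sum>j<m. \<bar>E$$(i,j)\<bar>)"
  have e0: "nsq m (\<lambda>i. if i = 0 then 1 else 0) = 1"
  proof -
    have "(\<Sum>i<m. ((if i = 0 then 1 else 0)::real)\<^sup>2) = (\<Sum>i<m. if i = 0 then 1 else 0)"
      by (rule sum.cong) auto
    then show ?thesis unfolding nsq_def using m by simp
  qed
  then have Sne: "S \<noteq> {}" unfolding S_def by blast
  have Sbdd: "bdd_below S"
  proof (rule bdd_belowI[of _ "-K"])
    fix s assume "s \<in> S"
    then obtain x where x: "nsq m x = 1" "s = qf E m x" unfolding S_def by blast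
    show "-K \<le> s" using qf_bound[OF x(1), of E] x(2) unfolding K_def by simp
  qed
  define \<rho> where "\<rho> = Inf S"
  have ex: "\<forall>k. \<exists>x. nsq m x = 1 \<and> qf E m x < \<rho> + inverse (real (Suc k))"
  proof
    fix k
    have "Inf S < \<rho> + inverse (real (Suc k))" unfolding \<rho>_def by simp
    from cInf_lessD[OF Sne this] show "\<exists>x. nsq m x = 1 \<and> qf E m x < \<rho> + inverse (real (Suc k))"
      unfolding S_def by blast
  qed
  obtain X where X': "\<forall>k. nsq m (X k) = 1 \<and> qf E m (X k) < \<rho> + inverse (real (Suc k))"
    using choice[OF ex] by blast
  have X: "\<And>k. nsq m (X k) = 1" "\<And>k. qf E m (X k) < \<rho> + inverse (real (Suc k))"
    using X' by auto
  obtain r where r: "strict_mono r" "\<forall>i<m. convergent (\<lambda>k. X (r k) i)"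
    using coord_subseq[of m X] nsq_one_le[OF X(1)] by blast
  define v where "v i = lim (\<lambda>k. X (r k) i)" for i
  have conv: "(\<lambda>k. X (r k) i) \<longlonglongrightarrow> v i" if "i < m" for i
    using r(2) that unfolding v_def by (simp add: convergent_LIMSEQ_iff)
  have "(\<lambda>k. nsq m (X (r k))) \<longlonglongrightarrow> nsq m v"
    unfolding nsq_def by (rule tendsto_sum, rule tendsto_power, rule conv) simp
  moreover have "(\<lambda>k. nsq m (X (r k))) = (\<lambda>k. 1)" using X(1) by simp
  ultimately have "(\<lambda>k. 1::real) \<longlonglongrightarrow> nsq m v" by simp
  then have v1: "nsq m v = 1" using LIMSEQ_unique[OF tendsto_const] by metis
  have qlim: "(\<lambda>k. qf E m (X (r k))) \<longlonglongrightarrow> qf E m v"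
    unfolding qf_def
    by (rule tendsto_sum, rule tendsto_sum, rule tendsto_mult, rule tendsto_mult,
        rule conv, simp, rule tendsto_const, rule conv, simp)
  have "qf E m v \<in> S" using v1 unfolding S_def by blast
  then have ge: "\<rho> \<le> qf E m v" unfolding \<rho>_def using Sbdd by (simp add: cInf_lower)
  have "(\<lambda>k. \<rho> + inverse (real (Suc (r k)))) \<longlonglongrightarrow> \<rho> + 0"
    using LIMSEQ_subseq_LIMSEQ[OF LIMSEQ_inverse_real_of_nat r(1)]
    by (intro tendsto_intros) (simp add: o_def)
  then have "qf E m v \<le> \<rho> + 0"
    using qlim X(2) by (intro LIMSEQ_le[OF qlim]) (auto intro!: less_imp_le)
  with ge have vq: "qf E m v = \<rho>" by simp
  have lower: "qf E m y \<ge> \<rho> * nsq m y" for y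
  proof (cases "nsq m y = 0")
    case True
    then have "qf E m y = 0" unfolding qf_def using nsq_zero[OF True] by simp
    then show ?thesis using True by simp
  next
    case False
    define c where "c = sqrt (nsq m y)"
    have cpos: "c > 0" using False nsq_nonneg[of m y] unfolding c_def by simp
    have c2: "c\<^sup>2 = nsq m y" unfolding c_def using nsq_nonneg[of m y] by simp
    have "nsq m (\<lambda>i. (1/c) * y i) = (1/c)\<^sup>2 * nsq m y" by (rule nsq_scale)
    then have "nsq m (\<lambda>i. (1/c) * y i) = 1" using c2 cpos False by (simp add: power_divide)
    then have "qf E m (\<lambda>i. (1/c) * y i) \<in> S" unfolding S_def by blast
    then have "\<rho> \<le> qf E m (\<lambda>i. (1/c) * y i)" unfolding \<rho>_def using Sbdd by (simp add: cInf_lower)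
    then have "\<rho> \<le> (1/c)\<^sup>2 * qf E m y" by (simp only: qf_scale)
    then have "\<rho> * c\<^sup>2 \<le> qf E m y" using cpos by (simp add: field_simps power_divide)
    then show ?thesis using c2 by simp
  qed
  have eig: "(\<Sum>j<m. E$$(i0,j) * v j) = \<rho> * v i0" if i0: "i0 < m" for i0
  proof -
    define w where "w = (\<lambda>j. if j = i0 then 1 else (0::real))"
    have b: "(\<Sum>i<m. \<Sum>j<m. w i * E$$(i,j) * v j) = (\<Sum>j<m. E$$(i0,j) * v j)"
    proof -
      have "(\<Sum>i<m. \<Sum>j<m. w i * E$$(i,j) * v j) = (\<Sum>i<m. if i = i0 then (\<Sum>j<m. E$$(i0,j) * v j) else 0)"
        by (rule sum.cong) (auto simp: w_def)
      then show ?thesis using i0 by simp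
    qed
    have s: "(\<Sum>i<m. w i * v i) = v i0"
    proof -
      have "(\<Sum>i<m. w i * v i) = (\<Sum>i<m. if i = i0 then v i0 else 0)"
        by (rule sum.cong) (auto simp: w_def)
      then show ?thesis using i0 by simp
    qed
    have "2*t*((\<Sum>j<m. E$$(i0,j) * v j) - \<rho> * v i0) + t\<^sup>2*(qf E m w - \<rho> * nsq m w) \<ge> 0" for t
    proof -
      have l: "qf E m (\<lambda>i. v i + t * w i) \<ge> \<rho> * nsq m (\<lambda>i. v i + t * w i)" by (rule lower)
      have e1: "qf E m (\<lambda>i. v i + t * w i) = \<rho> + 2*t*(\<Sum>j<m. E$$(i0,j) * v j) + t\<^sup>2 * qf E m w"
        using qf_expand[OF sym, of m v t w] b vq by simp
      have e2: "nsq m (\<lambda>i. v i + t * w i) = 1 + 2*t * v i0 + t\<^sup>2 * nsq m w"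
        using nsq_expand[of m v t w] s v1 by simp
      show ?thesis using l unfolding e1 e2 by (simp add: algebra_simps)
    qed
    from quad_zero[OF this] show ?thesis by simp
  qed
  have ev: "eigenvalue E \<rho>"
    unfolding eigenvalue_def eigenvector_def
  proof (intro exI conjI)
    show "vec m v \<in> carrier_vec (dim_row E)" using E by simp
    show "vec m v \<noteq> 0\<^sub>v (dim_row E)"
    proof
      assume "vec m v = 0\<^sub>v (dim_row E)"
      then have "v i = 0" if "i < m" for i
      proof -
        from \<open>vec m v = 0\<^sub>v (dim_row E)\<close> have "vec m v $ i = 0\<^sub>v (dim_row E) $ i" by simp
        then show ?thesis using E that by simp
      qed
      then have "nsq m v = 0" unfolding nsq_def by simp
      with v1 show False by simp
    qed
    show "E *\<^sub>v vec m v = \<rho> \<cdot>\<^sub>v vec m v"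
    proof (rule eq_vecI)
      fix i assume "i < dim_vec (\<rho> \<cdot>\<^sub>v vec m v)"
      then have i: "i < m" by simp
      have "(E *\<^sub>v vec m v) $ i = row E i \<bullet> vec m v" using E i by simp
      also have "\<dots> = (\<Sum>j<m. E$$(i,j) * v j)" using E i
        by (simp add: scalar_prod_def atLeast0LessThan)
      also have "\<dots> = \<rho> * v i" by (rule eig[OF i])
      finally show "(E *\<^sub>v vec m v) $ i = (\<rho> \<cdot>\<^sub>v vec m v) $ i" using i by simp
    next
      show "dim_vec (E *\<^sub>v vec m v) = dim_vec (\<rho> \<cdot>\<^sub>v vec m v)" using E by simp
    qed
  qed
  have evge: "\<rho> \<le> l" if evl: "eigenvalue E l" for l
  proof -
    from evl obtain u where "eigenvector E u l" unfolding eigenvalue_def by blast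
    then have u: "u \<in> carrier_vec m" "u \<noteq> 0\<^sub>v m" "E *\<^sub>v u = l \<cdot>\<^sub>v u"
      using E unfolding eigenvector_def by auto
    define x where "x i = u $ i" for i
    have row: "(\<Sum>j<m. E$$(i,j) * x j) = l * x i" if "i < m" for i
    proof -
      have "(\<Sum>j<m. E$$(i,j) * x j) = row E i \<bullet> u" using E u(1) that unfolding x_def
        by (simp add: scalar_prod_def atLeast0LessThan)
      also have "\<dots> = (E *\<^sub>v u) $ i" using E that by simp
      also have "\<dots> = (l \<cdot>\<^sub>v u) $ i" using u(3) by simp
      also have "\<dots> = l * x i" using u(1) that unfolding x_def by simp
      finally show ?thesis .
    qed
    have "qf E m x = (\<Sum>i<m. x i * (\<Sum>j<m. E$$(i,j) * x j))"
      unfolding qf_def by (simp add: sum_distrib_left mult.assoc)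
    also have "\<dots> = (\<Sum>i<m. x i * (l * x i))" using row by simp
    also have "\<dots> = (\<Sum>i<m. l * (x i)\<^sup>2)" by (rule sum.cong) (auto simp: power2_eq_square)
    also have "\<dots> = l * nsq m x" unfolding nsq_def by (simp add: sum_distrib_left)
    finally have q: "qf E m x = l * nsq m x" .
    have "nsq m x \<noteq> 0"
    proof
      assume "nsq m x = 0"
      then have z: "u $ i = 0" if "i < m" for i using nsq_zero that unfolding x_def by blast
      have "u = 0\<^sub>v m" by (rule eq_vecI) (use u(1) z in auto)
      with u(2) show False by simp
    qed
    then have "nsq m x > 0" using nsq_nonneg[of m x] by simp
    moreover have "\<rho> * nsq m x \<le> l * nsq m x" using lower[of x] q by simp
    ultimately show ?thesis by simp
  qed
  have fin: "finite {l. eigenvalue E l}"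
  proof -
    have "char_poly E \<noteq> 0" using degree_monic_char_poly[OF E] by auto
    then have "finite {l. poly (char_poly E) l = 0}" by (rule poly_roots_finite)
    then show ?thesis using eigenvalue_root_char_poly[OF E] by simp
  qed
  have lm: "lambda_min E = \<rho>"
    unfolding lambda_min_def using fin ev evge by (intro Min_eqI) auto
  show "\<exists>x. nsq m x = 1 \<and> qf E m x = lambda_min E" using v1 vq lm by (intro exI[of _ v]) simp
  show "qf E m y \<ge> lambda_min E * nsq m y" for y using lower lm by simp
qed



lemma gweight_meas: "gweight \<alpha> \<in> borel_measurable lborel"
  unfolding gweight_def by measurable

lemma gweight_nonneg: "gweight \<alpha> t \<ge> 0"
  unfolding gweight_def by simp

lemma gweight_even: "gweight \<alpha> (-t) = gweight \<alpha> t"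
  unfolding gweight_def by simp

lemma poly_meas: "(\<lambda>t. poly q t) \<in> borel_measurable (lborel :: real measure)"
proof -
  have "(\<lambda>t. poly q t) \<in> borel_measurable (borel :: real measure)"
    by (rule borel_measurable_continuous_onI) (intro continuous_intros)
  then show ?thesis by simp
qed

lemma set_borel_meas_poly: "set_borel_measurable lborel {-1<..<1} (\<lambda>t. poly q t * gweight \<alpha> t)"
  unfolding set_borel_measurable_def
  using gweight_meas poly_meas by measurable

lemma poly_bounded: "\<exists>B. \<forall>t\<in>{-1..1::real}. \<bar>poly q t\<bar> \<le> B"
proof -
  have "compact (poly q ` {-1..1::real})"
    by (intro compact_continuous_image continuous_intros) auto
  then have "bounded (poly q ` {-1..1::real})" by (rule compact_imp_bounded)
  then obtain B where "\<forall>y\<in>poly q ` {-1..1::real}. norm y \<le> B" unfolding bounded_iff by blast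
  then show ?thesis by auto
qed

locale gs =
  fixes \<alpha> :: real and p :: "nat \<Rightarrow> real poly"
  assumes orth: "orthonormal_polys \<alpha> p"
begin

lemma deg_p: "degree (p k) = k" and lc_p: "lead_coeff (p k) > 0"
  and orth_ip: "wip \<alpha> (poly (p j)) (poly (p k)) = (if j = k then 1 else 0)"
  using orth unfolding orthonormal_polys_def by blast+

lemma w_int: "set_integrable lborel {-1<..<1} (gweight \<alpha>)"
proof -
  define c where "c = coeff (p 0) 0"
  have c: "c > 0" using lc_p[of 0] deg_p[of 0] unfolding c_def by simp
  have p0: "poly (p 0) t = c" for t
    using deg_p[of 0] unfolding c_def by (metis degree_0_id poly_const_conv)
  have "wip \<alpha> (poly (p 0)) (poly (p 0)) = 1" using orth_ip[of 0 0] by simp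
  then have one: "(LINT t:{-1<..<1}|lborel. (c*c) * gweight \<alpha> t) = 1"
    unfolding wip_def p0 by (simp add: mult.assoc)
  have "set_integrable lborel {-1<..<1} (\<lambda>t. (c*c) * gweight \<alpha> t)"
  proof (rule ccontr)
    assume "\<not> ?thesis"
    then have "(LINT t:{-1<..<1}|lborel. (c*c) * gweight \<alpha> t) = 0"
      unfolding set_integrable_def set_lebesgue_integral_def
      by (rule not_integrable_integral_eq)
    with one show False by simp
  qed
  then show ?thesis using c by simp
qed

lemma poly_int: "set_integrable lborel {-1<..<1} (\<lambda>t. poly q t * gweight \<alpha> t)"
proof -
  obtain B where B: "\<forall>t\<in>{-1..1::real}. \<bar>poly q t\<bar> \<le> B" using poly_bounded by blast
  show ?thesis
  proof (rule set_integrable_bound[OF _ set_borel_meas_poly])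
    show "set_integrable lborel {-1<..<1} (\<lambda>t. B * gweight \<alpha> t)"
      using w_int by simp
    show "AE x in lborel. x \<in> {-1<..<1} \<longrightarrow> norm (poly q x * gweight \<alpha> x) \<le> norm (B * gweight \<alpha> x)"
    proof (rule AE_I2, rule impI)
      fix x :: real assume x: "x \<in> {-1<..<1}"
      then have "\<bar>poly q x\<bar> \<le> B" using B by auto
      then have "\<bar>poly q x\<bar> * gweight \<alpha> x \<le> \<bar>B\<bar> * gweight \<alpha> x"
        using gweight_nonneg[of \<alpha> x] by (intro mult_right_mono) auto
      then show "norm (poly q x * gweight \<alpha> x) \<le> norm (B * gweight \<alpha> x)"
        using gweight_nonneg[of \<alpha> x] by (simp add: abs_mult)
    qed
  qed
qed

definition ip :: "real poly \<Rightarrow> real poly \<Rightarrow> real" where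
  "ip q r = wip \<alpha> (poly q) (poly r)"

lemma ip_alt: "ip q r = (LINT t:{-1<..<1}|lborel. poly (q*r) t * gweight \<alpha> t)"
  unfolding ip_def wip_def by simp

lemma ip_sym: "ip q r = ip r q"
  unfolding ip_alt by (simp add: mult.commute)

lemma ip_add_left: "ip (q1 + q2) r = ip q1 r + ip q2 r"
proof -
  have "ip (q1 + q2) r = (LINT t:{-1<..<1}|lborel. poly (q1*r) t * gweight \<alpha> t + poly (q2*r) t * gweight \<alpha> t)"
    unfolding ip_alt by (simp add: distrib_right)
  also have "\<dots> = ip q1 r + ip q2 r"
    unfolding ip_alt by (rule set_integral_add(2)[OF poly_int poly_int])
  finally show ?thesis .
qed

lemma ip_smult_left: "ip (Polynomial.smult c q) r = c * ip q r"
proof -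
  have "ip (Polynomial.smult c q) r = (LINT t:{-1<..<1}|lborel. c * (poly (q*r) t * gweight \<alpha> t))"
    unfolding ip_alt by (simp add: mult.assoc)
  then show ?thesis unfolding ip_alt by simp
qed

lemma ip_zero_left: "ip 0 r = 0"
  unfolding ip_alt by simp

lemma ip_sum_left: "ip (\<Sum>a\<in>A. f a) r = (\<Sum>a\<in>A. ip (f a) r)"
proof (induction A rule: infinite_finite_induct)
  case (infinite A)
  then show ?case by (simp add: ip_zero_left)
next
  case empty
  then show ?case by (simp add: ip_zero_left)
next
  case (insert x F)
  then show ?case by (simp add: ip_add_left)
qed

lemma ip_pp: "ip (p j) (p k) = (if j = k then 1 else 0)"
  unfolding ip_def by (rule orth_ip)

lemma ip_comb: "j \<le> d \<Longrightarrow> ip (\<Sum>k\<le>d. Polynomial.smult (b k) (p k)) (p j) = b j"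
proof -
  assume j: "j \<le> d"
  have "ip (\<Sum>k\<le>d. Polynomial.smult (b k) (p k)) (p j) = (\<Sum>k\<le>d. b k * (if k = j then 1 else 0))"
    by (simp add: ip_sum_left ip_smult_left ip_pp)
  also have "\<dots> = (\<Sum>k\<le>d. if k = j then b j else 0)" by (rule sum.cong) auto
  also have "\<dots> = b j" using j by simp
  finally show ?thesis .
qed

lemma span: "degree q \<le> d \<Longrightarrow> \<exists>b. q = (\<Sum>k\<le>d. Polynomial.smult (b k) (p k))"
proof (induction d arbitrary: q)
  case 0
  define a where "a = coeff q 0"
  have q: "q = [:a:]" using 0 unfolding a_def by (metis degree_0_id le_zero_eq)
  define c where "c = coeff (p 0) 0"
  have c: "c > 0" using lc_p[of 0] deg_p[of 0] unfolding c_def by simp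
  have p0: "p 0 = [:c:]" using deg_p[of 0] unfolding c_def by (metis degree_0_id)
  have "q = Polynomial.smult (a / c) (p 0)" using c by (simp add: q p0)
  then show ?case by (intro exI[of _ "\<lambda>_. a / c"]) simp
next
  case (Suc d)
  define c where "c = coeff q (Suc d) / lead_coeff (p (Suc d))"
  define q' where "q' = q - Polynomial.smult c (p (Suc d))"
  have lc: "lead_coeff (p (Suc d)) \<noteq> 0"
  proof
    assume "lead_coeff (p (Suc d)) = 0"
    with lc_p[of "Suc d"] show False by simp
  qed
  have dq': "degree q' \<le> Suc d" unfolding q'_def using Suc.prems deg_p[of "Suc d"]
    by (intro degree_diff_le) (auto intro: order.trans[OF degree_smult_le])
  have cq': "coeff q' (Suc d) = 0" unfolding q'_def c_def using lc deg_p[of "Suc d"] by simp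
  have "degree q' \<le> d"
  proof (rule ccontr)
    assume "\<not> degree q' \<le> d"
    then have "degree q' = Suc d" using dq' by simp
    then have "lead_coeff q' = 0" using cq' by simp
    then have "q' = 0" by simp
    then show False using \<open>\<not> degree q' \<le> d\<close> by simp
  qed
  from Suc.IH[OF this] obtain b where b: "q' = (\<Sum>k\<le>d. Polynomial.smult (b k) (p k))" by blast
  define b' where "b' = b(Suc d := c)"
  have "q = q' + Polynomial.smult c (p (Suc d))" unfolding q'_def by simp
  also have "\<dots> = (\<Sum>k\<le>Suc d. Polynomial.smult (b' k) (p k))"
    unfolding b b'_def by (simp add: sum.atMost_Suc)
  finally show ?case by blast
qed

lemma expand: "degree q \<le> d \<Longrightarrow> q = (\<Sum>k\<le>d. Polynomial.smult (ip q (p k)) (p k))"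
proof -
  assume "degree q \<le> d"
  from span[OF this] obtain b where b: "q = (\<Sum>k\<le>d. Polynomial.smult (b k) (p k))" by blast
  have "(\<Sum>k\<le>d. Polynomial.smult (ip q (p k)) (p k)) = (\<Sum>k\<le>d. Polynomial.smult (b k) (p k))"
    by (rule sum.cong) (auto simp: b ip_comb simp del: ip_sum_left)
  then show ?thesis using b by simp
qed

lemma parseval: "degree q \<le> d \<Longrightarrow> ip q q = (\<Sum>k\<le>d. (ip q (p k))\<^sup>2)"
proof -
  assume d: "degree q \<le> d"
  have "ip q q = ip (\<Sum>k\<le>d. Polynomial.smult (ip q (p k)) (p k)) q" using expand[OF d] by simp
  also have "\<dots> = (\<Sum>k\<le>d. ip q (p k) * ip (p k) q)" by (simp add: ip_sum_left ip_smult_left)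
  also have "\<dots> = (\<Sum>k\<le>d. (ip q (p k))\<^sup>2)" by (rule sum.cong) (auto simp: ip_sym[of "p _"] power2_eq_square)
  finally show ?thesis .
qed

lemma ip_high: "degree q < k \<Longrightarrow> ip q (p k) = 0"
proof -
  assume k: "degree q < k"
  have "ip q (p k) = ip (\<Sum>j\<le>degree q. Polynomial.smult (ip q (p j)) (p j)) (p k)" using expand[of q "degree q"] by simp
  also have "\<dots> = (\<Sum>j\<le>degree q. ip q (p j) * (if j = k then 1 else 0))"
    by (simp add: ip_sum_left ip_smult_left ip_pp)
  also have "\<dots> = 0" using k by (intro sum.neutral) auto
  finally show ?thesis .
qed

lemma ip_pos: "q \<noteq> 0 \<Longrightarrow> ip q q > 0"
proof -
  assume q: "q \<noteq> 0"
  have ge: "ip q q = (\<Sum>k\<le>degree q. (ip q (p k))\<^sup>2)" by (rule parseval) simp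
  have "ip q q \<noteq> 0"
  proof
    assume "ip q q = 0"
    then have "\<forall>k\<in>{..degree q}. (ip q (p k))\<^sup>2 = 0" using ge by (simp add: sum_nonneg_eq_0_iff)
    then have "(\<Sum>k\<le>degree q. Polynomial.smult (ip q (p k)) (p k)) = 0"
      by (intro sum.neutral) auto
    then show False using q expand[of q "degree q"] by simp
  qed
  moreover have "ip q q \<ge> 0" using ge by (simp add: sum_nonneg)
  ultimately show ?thesis by simp
qed

end


lemma pderiv_sum': "pderiv (\<Sum>a\<in>A. f a) = (\<Sum>a\<in>A. pderiv (f a))"
  by (induction A rule: infinite_finite_induct) (simp_all add: pderiv_add)

lemma neg1_sq: "((-1::real)^k) * (-1)^k = 1"
  by (simp add: power_mult_distrib[symmetric])

context gs
begin

lemma reflect_int: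
  fixes f :: "real \<Rightarrow> real"
  shows "(LINT t:{-1<..<1}|lborel. f (-t)) = (LINT t:{-1<..<1}|lborel. f t)"
proof -
  have "(LINT t:{-1<..<1}|lborel. f t) = integral\<^sup>L lborel (\<lambda>t. indicator {-1<..<1} t *\<^sub>R f t)"
    by (simp add: set_lebesgue_integral_def)
  also have "\<dots> = \<bar>-1::real\<bar> *\<^sub>R integral\<^sup>L lborel (\<lambda>x. indicator {-1<..<1} (0 + -1*x) *\<^sub>R f (0 + -1*x))"
    by (rule lborel_integral_real_affine) simp
  also have "\<dots> = integral\<^sup>L lborel (\<lambda>x. indicator {-1<..<1} (-x) *\<^sub>R f (-x))"
    by simp
  also have "\<dots> = integral\<^sup>L lborel (\<lambda>x. indicator {-1<..<1} x *\<^sub>R f (-x))"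
    by (rule Bochner_Integration.integral_cong) (auto simp: indicator_def)
  finally show ?thesis by (simp add: set_lebesgue_integral_def)
qed

definition q1 :: "real poly" where "q1 = [:0, -1:]"

definition r :: "nat \<Rightarrow> real poly" where
  "r k = Polynomial.smult ((-1)^k) (p k \<circ>\<^sub>p q1)"

lemma poly_r: "poly (r k) t = (-1)^k * poly (p k) (-t)"
  unfolding r_def q1_def by (simp add: poly_pcompose)

lemma deg_r: "degree (r k) = k"
  unfolding r_def q1_def by (simp add: degree_pcompose deg_p)

lemma lc_r: "lead_coeff (r k) = lead_coeff (p k)"
proof -
  have "lead_coeff (p k \<circ>\<^sub>p q1) = lead_coeff (p k) * lead_coeff q1 ^ degree (p k)"
    by (rule lead_coeff_comp) (simp add: q1_def)
  then have "lead_coeff (p k \<circ>\<^sub>p q1) = lead_coeff (p k) * (-1) ^ k"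
    by (simp add: deg_p q1_def)
  then have "lead_coeff (r k) = (-1)^k * (lead_coeff (p k) * (-1)^k)"
    unfolding r_def by (simp only: lead_coeff_smult)
  also have "\<dots> = lead_coeff (p k) * ((-1)^k * (-1)^k)" by (simp add: algebra_simps)
  finally show ?thesis by (simp add: neg1_sq)
qed

lemma ip_rr: "ip (r k) (r j) = (-1)^k * (-1)^j * ip (p k) (p j)"
proof -
  have "ip (r k) (r j) = (LINT t:{-1<..<1}|lborel. (-1)^k * (-1)^j * (poly (p k) (-t) * poly (p j) (-t) * gweight \<alpha> (-t)))"
    unfolding ip_def wip_def poly_r gweight_even by (simp add: algebra_simps)
  also have "\<dots> = (-1)^k * (-1)^j * (LINT t:{-1<..<1}|lborel. (\<lambda>t. poly (p k) t * poly (p j) t * gweight \<alpha> t) (-t))"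
    by simp
  also have "\<dots> = (-1)^k * (-1)^j * ip (p k) (p j)"
    using reflect_int[of "\<lambda>t. poly (p k) t * poly (p j) t * gweight \<alpha> t"] by (simp add: ip_def wip_def)
  finally show ?thesis .
qed

lemma r_eq_p: "r k = p k"
proof (induction k rule: less_induct)
  case (less k)
  have e: "r k = (\<Sum>j\<le>k. Polynomial.smult (ip (r k) (p j)) (p j))"
    using expand[of "r k" k] deg_r by simp
  have z: "ip (r k) (p j) = 0" if "j < k" for j
  proof -
    have "ip (r k) (p j) = ip (r k) (r j)" using less.IH[OF that] by simp
    also have "\<dots> = 0" using that by (simp add: ip_rr ip_pp)
    finally show ?thesis .
  qed
  have "(\<Sum>j\<le>k. Polynomial.smult (ip (r k) (p j)) (p j)) =
        (\<Sum>j<k. Polynomial.smult (ip (r k) (p j)) (p j)) + Polynomial.smult (ip (r k) (p k)) (p k)"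
    by (simp add: lessThan_Suc_atMost[symmetric])
  also have "(\<Sum>j<k. Polynomial.smult (ip (r k) (p j)) (p j)) = 0"
    by (intro sum.neutral) (auto simp: z)
  finally have rk: "r k = Polynomial.smult (ip (r k) (p k)) (p k)" using e by simp
  then have "lead_coeff (r k) = ip (r k) (p k) * lead_coeff (p k)" by (metis lead_coeff_smult)
  then have "ip (r k) (p k) * lead_coeff (p k) = 1 * lead_coeff (p k)" using lc_r by simp
  then have "ip (r k) (p k) = 1" using lc_p[of k] by (metis less_irrefl mult_right_cancel)
  then show ?case using rk by simp
qed

lemma parity_p: "poly (p k) (-t) = (-1)^k * poly (p k) t"
proof -
  have "poly (p k) t = (-1)^k * poly (p k) (-t)" using poly_r[of k t] r_eq_p by simp
  then have "(-1)^k * poly (p k) t = ((-1)^k * (-1)^k) * poly (p k) (-t)" by simp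
  then show ?thesis by (simp add: neg1_sq)
qed

lemma parity_dp: "poly (pderiv (p k)) (-t) = -((-1::real)^k) * poly (pderiv (p k)) t"
proof -
  have "pderiv (r k) = pderiv (p k)" using r_eq_p by simp
  then have "Polynomial.smult ((-1)^k) ((pderiv (p k) \<circ>\<^sub>p q1) * pderiv q1) = pderiv (p k)"
    unfolding r_def by (simp add: pderiv_smult pderiv_pcompose)
  then have "poly (Polynomial.smult ((-1)^k) ((pderiv (p k) \<circ>\<^sub>p q1) * pderiv q1)) t = poly (pderiv (p k)) t"
    by simp
  then have "(-1)^k * (poly (pderiv (p k)) (-t) * (-1)) = poly (pderiv (p k)) t"
    unfolding q1_def by (simp add: poly_pcompose pderiv_pCons)
  then have H: "poly (pderiv (p k)) t = -((-1)^k * poly (pderiv (p k)) (-t))" by simp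
  have "-((-1::real)^k) * poly (pderiv (p k)) t = ((-1)^k * (-1)^k) * poly (pderiv (p k)) (-t)"
    by (subst H) (simp add: algebra_simps)
  then show ?thesis by (simp add: neg1_sq)
qed

lemma A_checker: "odd (i + j) \<Longrightarrow> ip (pderiv (p (Suc j))) (p i) = 0"
proof -
  assume odd: "odd (i + j)"
  define f where "f t = poly (pderiv (p (Suc j))) t * poly (p i) t * gweight \<alpha> t" for t
  have sgn: "(-1::real)^j * (-1)^i = -1"
    using odd by (simp add: power_add[symmetric] minus_one_power_iff add.commute)
  have fm: "f (-t) = - f t" for t
  proof -
    have "f (-t) = ((-1)^j * (-1)^i) * f t"
      unfolding f_def parity_dp parity_p gweight_even by (simp add: algebra_simps)
    then show ?thesis using sgn by simp
  qed
  have I: "ip (pderiv (p (Suc j))) (p i) = (LINT t:{-1<..<1}|lborel. f t)"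
    unfolding ip_def wip_def f_def by simp
  have "(LINT t:{-1<..<1}|lborel. f t) = (LINT t:{-1<..<1}|lborel. f (-t))"
    by (rule reflect_int[symmetric])
  also have "\<dots> = (LINT t:{-1<..<1}|lborel. - f t)" by (simp add: fm)
  also have "\<dots> = - (LINT t:{-1<..<1}|lborel. f t)"
  proof (rule set_integral_uminus)
    have "set_integrable lborel {-1<..<1} (\<lambda>t. poly (pderiv (p (Suc j)) * p i) t * gweight \<alpha> t)"
      by (rule poly_int)
    then show "set_integrable lborel {-1<..<1} f" unfolding f_def by simp
  qed
  finally show ?thesis using I by simp
qed

end


lemma inv_exists:
  fixes A :: "real mat"
  assumes A: "A \<in> carrier_mat n n" and d: "det A \<noteq> 0"
  shows "\<exists>B. mat_inverse A = Some B \<and> A * B = 1\<^sub>m n \<and> B * A = 1\<^sub>m n \<and> B \<in> carrier_mat n n"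
proof (cases "mat_inverse A")
  case None
  from mat_inverse(1)[OF A None, of "()"] det_non_zero_imp_unit[OF A d, of "()"] show ?thesis by blast
next
  case (Some B)
  from mat_inverse(2)[OF A Some] show ?thesis using Some by blast
qed

lemma mult_entry:
  fixes A B :: "real mat"
  assumes "A \<in> carrier_mat n n" "B \<in> carrier_mat n n" "i < n" "k < n"
  shows "(A * B) $$ (i,k) = (\<Sum>j<n. A$$(i,j) * B$$(j,k))"
  using assms by (simp add: scalar_prod_def atLeast0LessThan)

lemma checker_inverse:
  fixes A B :: "real mat"
  assumes A: "A \<in> carrier_mat n n" and B: "B \<in> carrier_mat n n"
    and AB: "A * B = 1\<^sub>m n" and BA: "B * A = 1\<^sub>m n"
    and Az: "\<And>i j. i < n \<Longrightarrow> j < n \<Longrightarrow> odd (i + j) \<Longrightarrow> A$$(i,j) = 0"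
    and ij: "i < n" "j < n" "odd (i + j)"
  shows "B$$(i,j) = 0"
proof -
  define B' where "B' = mat n n (\<lambda>(i,j). (-1::real)^(i+j) * B$$(i,j))"
  have B': "B' \<in> carrier_mat n n" unfolding B'_def by simp
  have AB': "A * B' = 1\<^sub>m n"
  proof (rule eq_matI)
    fix i k assume ik: "i < dim_row (1\<^sub>m n :: real mat)" "k < dim_col (1\<^sub>m n :: real mat)"
    then have i: "i < n" and k: "k < n" by auto
    have "(A * B') $$ (i,k) = (\<Sum>j<n. A$$(i,j) * B'$$(j,k))" by (rule mult_entry[OF A B' i k])
    also have "\<dots> = (\<Sum>j<n. (-1)^(i+k) * (A$$(i,j) * B$$(j,k)))"
    proof (rule sum.cong)
      fix j assume "j \<in> {..<n}"
      then have j: "j < n" by simp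
      show "A$$(i,j) * B'$$(j,k) = (-1)^(i+k) * (A$$(i,j) * B$$(j,k))"
      proof (cases "odd (i + j)")
        case True
        then show ?thesis using Az[OF i j] by simp
      next
        case False
        then have "(-1::real)^(j+k) = (-1)^(i+k)"
          by (simp add: minus_one_power_iff)
        then show ?thesis using j k unfolding B'_def by simp
      qed
    qed simp
    also have "\<dots> = (-1)^(i+k) * (A * B)$$(i,k)"
      by (simp add: mult_entry[OF A B i k] sum_distrib_left)
    also have "\<dots> = 1\<^sub>m n $$ (i,k)" using AB i k by simp
    finally show "(A * B') $$ (i,k) = 1\<^sub>m n $$ (i,k)" .
  qed (use A B' in auto)
  have BB': "B = B'"
  proof -
    have "B = B * (A * B')" using AB' B by simp
    also have "\<dots> = (B * A) * B'" using A B B' by simp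
    also have "\<dots> = B'" using BA B' by simp
    finally show ?thesis .
  qed
  have "B'$$(i,j) = (-1)^(i+j) * B$$(i,j)" unfolding B'_def using ij by simp
  then have "B$$(i,j) = (-1)^(i+j) * B$$(i,j)" using BB' by simp
  then show ?thesis using ij(3) by (simp add: minus_one_power_iff)
qed

context gs
begin

lemma A_entry: "i < n \<Longrightarrow> j < n \<Longrightarrow> A_mat \<alpha> p n $$ (i,j) = ip (pderiv (p (Suc j))) (p i)"
  by (simp add: A_mat_def ip_def)

lemma A_carrier: "A_mat \<alpha> p n \<in> carrier_mat n n"
  by (simp add: A_mat_def)

lemma pderiv_p0: "pderiv (p 0) = 0"
  using deg_p[of 0] by (simp add: pderiv_eq_0_iff)

lemma key:
  assumes q: "degree q \<le> n" and i: "i < n"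
  shows "ip (pderiv q) (p i) = (\<Sum>j<n. A_mat \<alpha> p n $$ (i,j) * ip q (p (Suc j)))"
proof -
  have "pderiv q = (\<Sum>k\<le>n. Polynomial.smult (ip q (p k)) (pderiv (p k)))"
    by (subst expand[OF q]) (simp add: pderiv_sum' pderiv_smult)
  then have "ip (pderiv q) (p i) = (\<Sum>k\<le>n. ip q (p k) * ip (pderiv (p k)) (p i))"
    by (simp add: ip_sum_left ip_smult_left)
  also have "\<dots> = (\<Sum>j<n. ip q (p (Suc j)) * ip (pderiv (p (Suc j))) (p i))"
    by (simp add: sum.atMost_shift pderiv_p0 ip_zero_left)
  also have "\<dots> = (\<Sum>j<n. A_mat \<alpha> p n $$ (i,j) * ip q (p (Suc j)))"
    by (rule sum.cong) (use i in \<open>auto simp: A_entry\<close>)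
  finally show ?thesis .
qed

lemma norm_d:
  assumes q: "degree q \<le> n" and n: "n \<ge> 1"
  shows "ip (pderiv q) (pderiv q) = (\<Sum>i<n. (ip (pderiv q) (p i))\<^sup>2)"
proof -
  have "degree (pderiv q) \<le> n - 1" using q by (simp add: degree_pderiv)
  from parseval[OF this] have "ip (pderiv q) (pderiv q) = (\<Sum>i\<le>n-1. (ip (pderiv q) (p i))\<^sup>2)" .
  also have "{..n-1} = {..<n}" using n by auto
  finally show ?thesis .
qed

lemma norm_q:
  assumes q: "degree q \<le> n"
  shows "ip q q = (ip q (p 0))\<^sup>2 + (\<Sum>j<n. (ip q (p (Suc j)))\<^sup>2)"
  using parseval[OF q] by (simp add: sum.atMost_shift)

lemma deg_comb: "degree (\<Sum>k\<le>n. Polynomial.smult (b k) (p k)) \<le> n"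
  by (rule degree_sum_le) (auto intro: order.trans[OF degree_smult_le] simp: deg_p)

lemma A_det:
  assumes n: "n \<ge> 1"
  shows "det (A_mat \<alpha> p n) \<noteq> 0"
proof
  assume "det (A_mat \<alpha> p n) = 0"
  then obtain v where v: "v \<in> carrier_vec n" "v \<noteq> 0\<^sub>v n" "A_mat \<alpha> p n *\<^sub>v v = 0\<^sub>v n"
    using det_0_iff_vec_prod_zero[OF A_carrier] by blast
  define bb where "bb k = (if k = 0 then 0 else v $ (k - 1))" for k
  define q where "q = (\<Sum>k\<le>n. Polynomial.smult (bb k) (p k))"
  have dq: "degree q \<le> n" unfolding q_def by (rule deg_comb)
  have ipq: "ip q (p k) = bb k" if "k \<le> n" for k unfolding q_def using that by (rule ip_comb)
  have z: "ip (pderiv q) (p i) = 0" if i: "i < n" for i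
  proof -
    have "ip (pderiv q) (p i) = (\<Sum>j<n. A_mat \<alpha> p n $$ (i,j) * v $ j)"
      unfolding key[OF dq i] by (rule sum.cong) (auto simp: ipq bb_def)
    also have "\<dots> = (A_mat \<alpha> p n *\<^sub>v v) $ i"
      using i v(1) A_carrier[of n] by (simp add: scalar_prod_def atLeast0LessThan)
    also have "\<dots> = 0" using v(3) i by simp
    finally show ?thesis .
  qed
  have "degree (pderiv q) \<le> n - 1" using dq by (simp add: degree_pderiv)
  from expand[OF this] have "pderiv q = (\<Sum>i\<le>n-1. Polynomial.smult (ip (pderiv q) (p i)) (p i))" .
  also have "\<dots> = 0" using n by (intro sum.neutral) (auto simp: z)
  finally have "degree q = 0" by (simp add: pderiv_eq_0_iff)
  then have "v $ j = 0" if "j < n" for j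
    using ip_high[of q "Suc j"] ipq[of "Suc j"] that unfolding bb_def by simp
  then have "v = 0\<^sub>v n" using v(1) by (intro eq_vecI) auto
  with v(2) show False by simp
qed

end


lemma Re_poly_of_real: "Re (poly P (complex_of_real t)) = poly (map_poly Re P) t"
proof (induction P)
  case (pCons a P)
  then show ?case by (simp add: map_poly_pCons)
qed simp

lemma Im_poly_of_real: "Im (poly P (complex_of_real t)) = poly (map_poly Im P) t"
proof (induction P)
  case (pCons a P)
  then show ?case by (simp add: map_poly_pCons)
qed simp

lemma map_Re_pderiv: "map_poly Re (pderiv P) = pderiv (map_poly Re P)"
  by (rule poly_eqI) (simp add: coeff_map_poly coeff_pderiv)

lemma map_Im_pderiv: "map_poly Im (pderiv P) = pderiv (map_poly Im P)"
  by (rule poly_eqI) (simp add: coeff_map_poly coeff_pderiv)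

lemma map_Re_Im_zero: "map_poly Re P = 0 \<Longrightarrow> map_poly Im P = 0 \<Longrightarrow> P = 0"
proof -
  assume "map_poly Re P = 0" "map_poly Im P = 0"
  then have "Re (coeff P k) = 0" "Im (coeff P k) = 0" for k
    by (metis coeff_0 coeff_map_poly zero_complex.simps)+
  then show "P = 0" by (intro poly_eqI) (simp add: complex_eq_iff)
qed

context gs
begin

lemma wnorm_ip: "wnorm \<alpha> P = sqrt (ip (map_poly Re P) (map_poly Re P) + ip (map_poly Im P) (map_poly Im P))"
proof -
  define a where "a = map_poly Re P"
  define b where "b = map_poly Im P"
  have "(cmod (poly P (of_real t)))\<^sup>2 * gweight \<alpha> t = poly (a*a) t * gweight \<alpha> t + poly (b*b) t * gweight \<alpha> t" for t
    unfolding cmod_power2 Re_poly_of_real Im_poly_of_real a_def b_def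
    by (simp add: power2_eq_square algebra_simps)
  then have "(LINT t:{-1<..<1}|lborel. (cmod (poly P (of_real t)))\<^sup>2 * gweight \<alpha> t) =
     (LINT t:{-1<..<1}|lborel. poly (a*a) t * gweight \<alpha> t + poly (b*b) t * gweight \<alpha> t)" by simp
  also have "\<dots> = ip a a + ip b b"
    unfolding ip_alt by (rule set_integral_add(2)[OF poly_int poly_int])
  finally show ?thesis unfolding wnorm_def a_def b_def by simp
qed

lemma ip_nonneg: "ip q q \<ge> 0"
  using ip_pos[of q] by (cases "q = 0") (auto simp: ip_zero_left)

end

lemma sum_split_2m: "(\<Sum>i<2*(m::nat). (f i :: 'a :: comm_monoid_add)) = (\<Sum>k<m. f (2*k)) + (\<Sum>k<m. f (2*k+1))"
  by (induction m) (simp_all add: algebra_simps)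

lemma sum_split_parity:
  "(\<Sum>i<(n::nat). (f i :: 'a :: comm_monoid_add)) = (\<Sum>k<(n+1) div 2. f (2*k)) + (\<Sum>k<n div 2. f (2*k+1))"
proof (cases "even n")
  case True
  then obtain m where m: "n = 2*m" by blast
  then have "(n+1) div 2 = m" "n div 2 = m" by auto
  then show ?thesis using m sum_split_2m by simp
next
  case False
  then obtain m where m: "n = 2*m+1" using oddE by blast
  then have "(n+1) div 2 = Suc m" "n div 2 = m" by auto
  then show ?thesis using m sum_split_2m[where m=m and f=f] by (simp add: ac_simps)
qed



lemma idx1: "k < ((n::nat)+1) div 2 \<Longrightarrow> 2*k < n" by presburger
lemma idx2: "k < (n::nat) div 2 \<Longrightarrow> 2*k+1 < n" by presburger

lemma block_nsq: "nsq n z = nsq ((n+1) div 2) (\<lambda>k. z (2*k)) + nsq (n div 2) (\<lambda>k. z (2*k+1))"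
  unfolding nsq_def by (rule sum_split_parity)

lemma block_qf:
  assumes Cz: "\<And>k l. k < n \<Longrightarrow> l < n \<Longrightarrow> odd (k+l) \<Longrightarrow> C$$(k,l) = 0"
  shows "qf C n z = qf (E_odd C ((n+1) div 2)) ((n+1) div 2) (\<lambda>k. z (2*k))
                  + qf (E_even C (n div 2)) (n div 2) (\<lambda>k. z (2*k+1))"
proof -
  define mo where "mo = (n+1) div 2"
  define me where "me = n div 2"
  define F where "F i = (\<Sum>l<mo. z i * C$$(i,2*l) * z (2*l)) + (\<Sum>l<me. z i * C$$(i,2*l+1) * z (2*l+1))" for i
  have "qf C n z = (\<Sum>i<n. F i)"
    unfolding qf_def F_def mo_def me_def by (rule sum.cong[OF refl]) (rule sum_split_parity)
  also have "\<dots> = (\<Sum>k<mo. F (2*k)) + (\<Sum>k<me. F (2*k+1))"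
    unfolding mo_def me_def by (rule sum_split_parity)
  also have "(\<Sum>k<mo. F (2*k)) = (\<Sum>k<mo. \<Sum>l<mo. z (2*k) * C$$(2*k,2*l) * z (2*l))"
  proof (rule sum.cong[OF refl])
    fix k assume k: "k \<in> {..<mo}"
    have "(\<Sum>l<me. z (2*k) * C$$(2*k,2*l+1) * z (2*l+1)) = 0"
    proof (rule sum.neutral, rule ballI)
      fix l assume l: "l \<in> {..<me}"
      have "C$$(2*k,2*l+1) = 0"
        using k l idx1[of k n] idx2[of l n] unfolding mo_def me_def by (intro Cz) auto
      then show "z (2*k) * C$$(2*k,2*l+1) * z (2*l+1) = 0" by simp
    qed
    then show "F (2*k) = (\<Sum>l<mo. z (2*k) * C$$(2*k,2*l) * z (2*l))" unfolding F_def by simp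
  qed
  also have "(\<Sum>k<me. F (2*k+1)) = (\<Sum>k<me. \<Sum>l<me. z (2*k+1) * C$$(2*k+1,2*l+1) * z (2*l+1))"
  proof (rule sum.cong[OF refl])
    fix k assume k: "k \<in> {..<me}"
    have "(\<Sum>l<mo. z (2*k+1) * C$$(2*k+1,2*l) * z (2*l)) = 0"
    proof (rule sum.neutral, rule ballI)
      fix l assume l: "l \<in> {..<mo}"
      have "C$$(2*k+1,2*l) = 0"
        using k l idx2[of k n] idx1[of l n] unfolding mo_def me_def by (intro Cz) auto
      then show "z (2*k+1) * C$$(2*k+1,2*l) * z (2*l) = 0" by simp
    qed
    then show "F (2*k+1) = (\<Sum>l<me. z (2*k+1) * C$$(2*k+1,2*l+1) * z (2*l+1))" unfolding F_def by simp
  qed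
  also have "(\<Sum>k<mo. \<Sum>l<mo. z (2*k) * C$$(2*k,2*l) * z (2*l)) = qf (E_odd C mo) mo (\<lambda>k. z (2*k))"
    unfolding qf_def E_odd_def by (intro sum.cong refl) auto
  also have "(\<Sum>k<me. \<Sum>l<me. z (2*k+1) * C$$(2*k+1,2*l+1) * z (2*l+1)) = qf (E_even C me) me (\<lambda>k. z (2*k+1))"
    unfolding qf_def E_even_def by (intro sum.cong refl) auto
  finally show ?thesis unfolding mo_def me_def .
qed

lemma inv_apply:
  fixes P Q :: "real mat"
  assumes PQ: "\<And>i k. i < n \<Longrightarrow> k < n \<Longrightarrow> (\<Sum>j<n. P$$(i,j) * Q$$(j,k)) = (if i = k then 1 else 0)"
    and i: "i < n"
  shows "(\<Sum>j<n. P$$(i,j) * (\<Sum>k<n. Q$$(j,k) * z k)) = z i"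
proof -
  have "(\<Sum>j<n. P$$(i,j) * (\<Sum>k<n. Q$$(j,k) * z k)) = (\<Sum>j<n. \<Sum>k<n. P$$(i,j) * Q$$(j,k) * z k)"
    by (simp add: sum_distrib_left mult.assoc)
  also have "\<dots> = (\<Sum>k<n. \<Sum>j<n. P$$(i,j) * Q$$(j,k) * z k)" by (rule sum.swap)
  also have "\<dots> = (\<Sum>k<n. (\<Sum>j<n. P$$(i,j) * Q$$(j,k)) * z k)" by (simp add: sum_distrib_right)
  also have "\<dots> = (\<Sum>k<n. (if i = k then z k else 0))" by (rule sum.cong) (auto simp: PQ i)
  also have "\<dots> = z i" using i by simp
  finally show ?thesis .
qed

lemma qf_BtB:
  fixes B C :: "real mat"
  assumes Ce: "\<And>k l. k < n \<Longrightarrow> l < n \<Longrightarrow> C$$(k,l) = (\<Sum>j<n. B$$(j,k) * B$$(j,l))"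
  shows "qf C n z = nsq n (\<lambda>j. \<Sum>k<n. B$$(j,k) * z k)"
proof -
  have "nsq n (\<lambda>j. \<Sum>k<n. B$$(j,k) * z k) = (\<Sum>j<n. \<Sum>k<n. \<Sum>l<n. (B$$(j,k) * z k) * (B$$(j,l) * z l))"
    unfolding nsq_def by (simp add: power2_eq_square sum_product)
  also have "\<dots> = (\<Sum>k<n. \<Sum>j<n. \<Sum>l<n. (B$$(j,k) * z k) * (B$$(j,l) * z l))" by (rule sum.swap)
  also have "\<dots> = (\<Sum>k<n. \<Sum>l<n. \<Sum>j<n. (B$$(j,k) * z k) * (B$$(j,l) * z l))"
    by (rule sum.cong[OF refl], rule sum.swap)
  also have "\<dots> = (\<Sum>k<n. \<Sum>l<n. z k * C$$(k,l) * z l)"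
  proof (intro sum.cong refl)
    fix k l assume "k \<in> {..<n}" "l \<in> {..<n}"
    then have "C$$(k,l) = (\<Sum>j<n. B$$(j,k) * B$$(j,l))" using Ce by simp
    then show "(\<Sum>j<n. (B$$(j,k) * z k) * (B$$(j,l) * z l)) = z k * C$$(k,l) * z l"
      by (simp add: sum_distrib_left sum_distrib_right algebra_simps)
  qed
  finally show ?thesis unfolding qf_def by simp
qed



lemma ratio_bound:
  fixes N D \<rho> :: real
  assumes "N \<le> D / \<rho>" "D > 0" "\<rho> > 0" "N \<ge> 0"
  shows "sqrt N / sqrt D \<le> 1 / sqrt \<rho>"
proof -
  have "sqrt N \<le> sqrt (D / \<rho>)" using assms(1) by (rule real_sqrt_le_mono)
  then have "sqrt N \<le> sqrt D / sqrt \<rho>" by (simp add: real_sqrt_divide)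
  then have "sqrt N / sqrt D \<le> (sqrt D / sqrt \<rho>) / sqrt D"
    by (rule divide_right_mono) (use assms(2) in simp)
  also have "\<dots> = 1 / sqrt \<rho>" using assms(2) by simp
  finally show ?thesis .
qed

lemma qf_zero_vec: "qf E m (\<lambda>_. 0) = 0" unfolding qf_def by simp
lemma nsq_zero_vec: "nsq m (\<lambda>_. 0) = 0" unfolding nsq_def by simp

theorem theorem7p2:
  fixes \<alpha> :: real and n :: nat and p :: "nat \<Rightarrow> real poly"
  assumes "\<alpha> > -1" and "orthonormal_polys \<alpha> p" and "n \<ge> 1"
  shows "markov_const \<alpha> n =
    1 / sqrt (if n div 2 = 0 then lambda_min (E_odd (C_mat \<alpha> p n) ((n+1) div 2))
              else min (lambda_min (E_odd (C_mat \<alpha> p n) ((n+1) div 2)))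
                       (lambda_min (E_even (C_mat \<alpha> p n) (n div 2))))"
proof -
  interpret gs \<alpha> p by (rule gs.intro) (rule assms(2))
  have n1: "n \<ge> 1" by (rule assms(3))
  define A where "A = A_mat \<alpha> p n"
  have Ac: "A \<in> carrier_mat n n" unfolding A_def by (rule A_carrier)
  have dA: "det A \<noteq> 0" unfolding A_def using n1 by (rule A_det)
  obtain B where B: "mat_inverse A = Some B" "A * B = 1\<^sub>m n" "B * A = 1\<^sub>m n" "B \<in> carrier_mat n n"
    using inv_exists[OF Ac dA] by blast
  have AtC: "transpose_mat A \<in> carrier_mat n n" using Ac by simp
  have dAt: "det (transpose_mat A) \<noteq> 0" using dA det_transpose[OF Ac] by simp
  obtain B2 where B2: "mat_inverse (transpose_mat A) = Some B2" "transpose_mat A * B2 = 1\<^sub>m n"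
      "B2 * transpose_mat A = 1\<^sub>m n" "B2 \<in> carrier_mat n n"
    using inv_exists[OF AtC dAt] by blast
  have BtC: "transpose_mat B \<in> carrier_mat n n" using B(4) by simp
  have B2eq: "B2 = transpose_mat B"
  proof -
    have "transpose_mat B = transpose_mat B * (transpose_mat A * B2)" using B2(2) BtC by simp
    also have "\<dots> = (transpose_mat B * transpose_mat A) * B2"
      by (rule assoc_mult_mat[symmetric, OF BtC AtC B2(4)])
    also have "transpose_mat B * transpose_mat A = transpose_mat (A * B)"
      by (rule transpose_mult[OF Ac B(4), symmetric])
    also have "\<dots> = 1\<^sub>m n" using B(2) by simp
    finally show ?thesis using B2(4) by simp
  qed
  define C where "C = C_mat \<alpha> p n"
  have Cdef: "C = transpose_mat B * B"
    unfolding C_def C_mat_def A_def[symmetric] using B(1) B2(1) B2eq by simp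
  have Ce: "C$$(k,l) = (\<Sum>j<n. B$$(j,k) * B$$(j,l))" if "k < n" "l < n" for k l
    unfolding Cdef using mult_entry[OF BtC B(4) that] B(4) that by simp
  have ABe: "(\<Sum>j<n. A$$(i,j) * B$$(j,k)) = (if i = k then 1 else 0)" if "i < n" "k < n" for i k
    using mult_entry[OF Ac B(4) that] B(2) that by simp
  have BAe: "(\<Sum>j<n. B$$(i,j) * A$$(j,k)) = (if i = k then 1 else 0)" if "i < n" "k < n" for i k
    using mult_entry[OF B(4) Ac that] B(3) that by simp
  have Az: "A$$(i,j) = 0" if "i < n" "j < n" "odd (i + j)" for i j
    unfolding A_def using A_entry[OF that(1,2)] A_checker[OF that(3)] by simp
  have Bz: "B$$(i,j) = 0" if "i < n" "j < n" "odd (i + j)" for i j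
    by (rule checker_inverse[OF Ac B(4) B(2) B(3) Az that])
  have Cz: "C$$(k,l) = 0" if kl: "k < n" "l < n" "odd (k + l)" for k l
  proof -
    have "(\<Sum>j<n. B$$(j,k) * B$$(j,l)) = 0"
    proof (rule sum.neutral, rule ballI)
      fix j assume "j \<in> {..<n}"
      then have j: "j < n" by simp
      show "B$$(j,k) * B$$(j,l) = 0"
      proof (cases "odd (j + k)")
        case True
        then show ?thesis using Bz[OF j kl(1)] by simp
      next
        case False
        then have "odd (j + l)" using kl(3) by presburger
        then show ?thesis using Bz[OF j kl(2)] by simp
      qed
    qed
    then show ?thesis using Ce[OF kl(1,2)] by simp
  qed
  have Csym: "C$$(k,l) = C$$(l,k)" if "k < n" "l < n" for k l
    using Ce[OF that] Ce[OF that(2,1)] by (simp add: mult.commute)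
  define mo where "mo = (n+1) div 2"
  define me where "me = n div 2"
  have mo_pos: "mo > 0" unfolding mo_def using n1 by simp
  define Eo where "Eo = E_odd C mo"
  define Ee where "Ee = E_even C me"
  have EoC: "Eo \<in> carrier_mat mo mo" unfolding Eo_def E_odd_def by simp
  have EeC: "Ee \<in> carrier_mat me me" unfolding Ee_def E_even_def by simp
  have Eosym: "Eo$$(i,j) = Eo$$(j,i)" if "i < mo" "j < mo" for i j
    using that idx1[of i n] idx1[of j n] Csym[of "2*i" "2*j"] unfolding Eo_def E_odd_def mo_def by simp
  have Eesym: "Ee$$(i,j) = Ee$$(j,i)" if "i < me" "j < me" for i j
    using that idx2[of i n] idx2[of j n] Csym[of "2*i+1" "2*j+1"] unfolding Ee_def E_even_def me_def by simp
  define lo where "lo = lambda_min Eo"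
  define le where "le = lambda_min Ee"
  obtain xo where xo: "nsq mo xo = 1" "qf Eo mo xo = lo"
    using rayleigh(1)[OF EoC mo_pos Eosym] unfolding lo_def by blast
  have lowo: "qf Eo mo y \<ge> lo * nsq mo y" for y
    unfolding lo_def by (rule rayleigh(2)[OF EoC mo_pos Eosym])
  define \<rho> where "\<rho> = (if me = 0 then lo else min lo le)"
  have qfsplit: "qf C n z = qf Eo mo (\<lambda>k. z (2*k)) + qf Ee me (\<lambda>k. z (2*k+1))" for z
    unfolding Eo_def Ee_def mo_def me_def by (rule block_qf[OF Cz])
  have nsqsplit: "nsq n z = nsq mo (\<lambda>k. z (2*k)) + nsq me (\<lambda>k. z (2*k+1))" for z
    unfolding mo_def me_def by (rule block_nsq)
  have lower: "qf C n z \<ge> \<rho> * nsq n z" for z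
  proof (cases "me = 0")
    case True
    then show ?thesis using lowo[of "\<lambda>k. z (2*k)"] unfolding qfsplit nsqsplit \<rho>_def
      by (simp add: qf_def nsq_def)
  next
    case False
    then have me_pos: "me > 0" by simp
    have lowe: "qf Ee me y \<ge> le * nsq me y" for y
      unfolding le_def by (rule rayleigh(2)[OF EeC me_pos Eesym])
    have r1: "\<rho> \<le> lo" "\<rho> \<le> le" unfolding \<rho>_def using False by auto
    have "\<rho> * nsq mo (\<lambda>k. z (2*k)) \<le> lo * nsq mo (\<lambda>k. z (2*k))"
      using r1 nsq_nonneg by (intro mult_right_mono) auto
    moreover have "\<rho> * nsq me (\<lambda>k. z (2*k+1)) \<le> le * nsq me (\<lambda>k. z (2*k+1))"
      using r1 nsq_nonneg by (intro mult_right_mono) auto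
    ultimately show ?thesis using lowo[of "\<lambda>k. z (2*k)"] lowe[of "\<lambda>k. z (2*k+1)"]
      unfolding qfsplit nsqsplit by (simp add: distrib_left)
  qed
  have attain: "\<exists>z. nsq n z = 1 \<and> qf C n z = \<rho>"
  proof (cases "me = 0 \<or> lo \<le> le")
    case True
    define z where "z i = (if even i then xo (i div 2) else 0)" for i
    have z1: "(\<lambda>k. z (2*k)) = xo" unfolding z_def by auto
    have z2: "(\<lambda>k. z (2*k+1)) = (\<lambda>_. 0)" unfolding z_def by auto
    have "nsq n z = 1" unfolding nsqsplit z1 z2 nsq_zero_vec using xo by simp
    moreover have "qf C n z = \<rho>" unfolding qfsplit z1 z2 qf_zero_vec using xo True
      unfolding \<rho>_def by auto
    ultimately show ?thesis by blast
  next
    case False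
    then have me_pos: "me > 0" by simp
    obtain xe where xe: "nsq me xe = 1" "qf Ee me xe = le"
      using rayleigh(1)[OF EeC me_pos Eesym] unfolding le_def by blast
    define z where "z i = (if odd i then xe (i div 2) else 0)" for i
    have z1: "(\<lambda>k. z (2*k)) = (\<lambda>_. 0)" unfolding z_def by auto
    have z2: "(\<lambda>k. z (2*k+1)) = xe" unfolding z_def by auto
    have "nsq n z = 1" unfolding nsqsplit z1 z2 nsq_zero_vec using xe by simp
    moreover have "qf C n z = \<rho>" unfolding qfsplit z1 z2 qf_zero_vec using xe False
      unfolding \<rho>_def by auto
    ultimately show ?thesis by blast
  qed
  define Bv where "Bv z = (\<lambda>j. \<Sum>k<n. B$$(j,k) * z k)" for z :: "nat \<Rightarrow> real"
  have qfB: "qf C n z = nsq n (Bv z)" for z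
    unfolding Bv_def by (rule qf_BtB[OF Ce])
  have qfpos: "qf C n z > 0" if nz: "nsq n z = 1" for z
  proof -
    have "nsq n (Bv z) \<noteq> 0"
    proof
      assume "nsq n (Bv z) = 0"
      then have "Bv z j = 0" if "j < n" for j using nsq_zero that by blast
      then have "z i = 0" if i: "i < n" for i
        using inv_apply[OF ABe i, of z, symmetric] i unfolding Bv_def by simp
      then have "nsq n z = 0" unfolding nsq_def by simp
      with nz show False by simp
    qed
    then show ?thesis using nsq_nonneg[of n "Bv z"] unfolding qfB by simp
  qed
  have rho_pos: "\<rho> > 0" using attain qfpos by auto
  have real_bound: "ip (pderiv q) (pderiv q) \<le> ip q q / \<rho>" if dq: "degree q \<le> n" for q
  proof -
    define y where "y j = ip q (p (Suc j))" for j
    define z where "z i = (\<Sum>j<n. A$$(i,j) * y j)" for i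
    have "ip (pderiv q) (pderiv q) = (\<Sum>i<n. (ip (pderiv q) (p i))\<^sup>2)" by (rule norm_d[OF dq n1])
    also have "\<dots> = nsq n z" unfolding nsq_def
      by (rule sum.cong) (auto simp: key[OF dq] z_def y_def A_def)
    finally have e1: "ip (pderiv q) (pderiv q) = nsq n z" .
    have "Bv z j = y j" if "j < n" for j
      unfolding Bv_def z_def by (rule inv_apply[OF BAe that])
    then have "nsq n (Bv z) = nsq n y" unfolding nsq_def by (intro sum.cong) auto
    then have e2: "qf C n z = nsq n y" by (simp add: qfB)
    have "ip q q = (ip q (p 0))\<^sup>2 + nsq n y" unfolding nsq_def y_def by (rule norm_q[OF dq])
    then have "nsq n y \<le> ip q q" by simp
    then have "\<rho> * nsq n z \<le> ip q q" using lower[of z] e2 by simp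
    then show ?thesis using e1 rho_pos by (simp add: pos_le_divide_eq mult.commute)
  qed
  define S where "S = {wnorm \<alpha> (pderiv P) / wnorm \<alpha> P | P. P \<noteq> 0 \<and> degree P \<le> n}"
  have upper: "s \<le> 1 / sqrt \<rho>" if "s \<in> S" for s
  proof -
    obtain P where P: "s = wnorm \<alpha> (pderiv P) / wnorm \<alpha> P" "P \<noteq> 0" "degree P \<le> n"
      using \<open>s \<in> S\<close> unfolding S_def by blast
    define a where "a = map_poly Re P"
    define b where "b = map_poly Im P"
    have da: "degree a \<le> n" unfolding a_def using map_poly_degree_leq[of Re P] P(3) by linarith
    have db: "degree b \<le> n" unfolding b_def using map_poly_degree_leq[of Im P] P(3) by linarith
    have ab: "a \<noteq> 0 \<or> b \<noteq> 0" using map_Re_Im_zero[of P] P(2) unfolding a_def b_def by blast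
    have Dpos: "ip a a + ip b b > 0"
      using ab ip_pos[of a] ip_pos[of b] ip_nonneg[of a] ip_nonneg[of b] by auto
    have "ip (pderiv a) (pderiv a) + ip (pderiv b) (pderiv b) \<le> ip a a / \<rho> + ip b b / \<rho>"
      using real_bound[OF da] real_bound[OF db] by simp
    also have "\<dots> = (ip a a + ip b b) / \<rho>" by (simp add: add_divide_distrib)
    finally have Nle: "ip (pderiv a) (pderiv a) + ip (pderiv b) (pderiv b) \<le> (ip a a + ip b b) / \<rho>" .
    have "s = sqrt (ip (pderiv a) (pderiv a) + ip (pderiv b) (pderiv b)) / sqrt (ip a a + ip b b)"
      unfolding P(1) wnorm_ip map_Re_pderiv map_Im_pderiv a_def b_def ..
    also have "\<dots> \<le> 1 / sqrt \<rho>"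
      using Nle Dpos rho_pos ip_nonneg[of "pderiv a"] ip_nonneg[of "pderiv b"]
      by (intro ratio_bound) auto
    finally show ?thesis .
  qed
  have inS: "1 / sqrt \<rho> \<in> S"
  proof -
    obtain z where z: "nsq n z = 1" "qf C n z = \<rho>" using attain by blast
    define y where "y = Bv z"
    define bb where "bb k = (if k = 0 then 0 else y (k - 1))" for k
    define q where "q = (\<Sum>k\<le>n. Polynomial.smult (bb k) (p k))"
    have dq: "degree q \<le> n" unfolding q_def by (rule deg_comb)
    have ipq: "ip q (p k) = bb k" if "k \<le> n" for k unfolding q_def using that by (rule ip_comb)
    have "ip (pderiv q) (pderiv q) = (\<Sum>i<n. (ip (pderiv q) (p i))\<^sup>2)" by (rule norm_d[OF dq n1])
    also have "\<dots> = (\<Sum>i<n. (z i)\<^sup>2)"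
    proof (rule sum.cong[OF refl])
      fix i assume "i \<in> {..<n}"
      then have i: "i < n" by simp
      have "ip (pderiv q) (p i) = (\<Sum>j<n. A$$(i,j) * y j)"
        unfolding key[OF dq i] A_def[symmetric] by (rule sum.cong) (auto simp: ipq bb_def)
      also have "\<dots> = z i" unfolding y_def Bv_def by (rule inv_apply[OF ABe i])
      finally show "(ip (pderiv q) (p i))\<^sup>2 = (z i)\<^sup>2" by simp
    qed
    also have "\<dots> = 1" using z(1) unfolding nsq_def .
    finally have N1: "ip (pderiv q) (pderiv q) = 1" .
    have "ip q q = (ip q (p 0))\<^sup>2 + (\<Sum>j<n. (ip q (p (Suc j)))\<^sup>2)" by (rule norm_q[OF dq])
    also have "\<dots> = nsq n y" unfolding nsq_def
      using ipq[of 0] by (simp add: ipq bb_def)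
    also have "\<dots> = \<rho>" using z(2) qfB[of z] unfolding y_def by simp
    finally have D1: "ip q q = \<rho>" .
    define P where "P = map_poly complex_of_real q"
    have PRe: "map_poly Re P = q" unfolding P_def by (rule poly_eqI) (simp add: coeff_map_poly)
    have PIm: "map_poly Im P = 0" unfolding P_def by (rule poly_eqI) (simp add: coeff_map_poly)
    have wP: "wnorm \<alpha> P = sqrt \<rho>" unfolding wnorm_ip PRe PIm D1 by (simp add: ip_zero_left)
    have wdP: "wnorm \<alpha> (pderiv P) = 1" unfolding wnorm_ip map_Re_pderiv map_Im_pderiv PRe PIm N1
      by (simp add: ip_zero_left)
    have "q \<noteq> 0" using D1 rho_pos by (auto simp: ip_zero_left)
    then have P0: "P \<noteq> 0" using PRe by auto
    have dP: "degree P \<le> n" unfolding P_def using map_poly_degree_leq[of complex_of_real q] dq by linarith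
    have "1 / sqrt \<rho> = wnorm \<alpha> (pderiv P) / wnorm \<alpha> P" using wP wdP by simp
    then show ?thesis unfolding S_def using P0 dP by blast
  qed
  have "markov_const \<alpha> n = Sup S" unfolding markov_const_def S_def ..
  also have "\<dots> = 1 / sqrt \<rho>" by (rule cSup_eq_maximum[OF inS upper])
  finally show ?thesis
    unfolding \<rho>_def lo_def le_def Eo_def Ee_def C_def mo_def me_def .
qed


end
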